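(* For $n=m=1$, consider the system $F_1=\sum_{i,j\in\{0,1\}}a_{ij}x_iy_j=0$, $F_2=\sum_{i,j\in\{0,1\}}b_{ij}x_iy_j=0$ on $\mathbb{P}^1\times\mathbb{P}^1$ with indeterminate coefficients. Up to sign, its discriminant equals \[\left(\det\begin{pmatrix}a_{00}&a_{01}\\ b_{10}&b_{11}\end{pmatrix}-\det\begin{pmatrix}a_{10}&a_{11}\\ b_{00}&b_{01}\end{pmatrix}\right)\left(\det\begin{pmatrix}a_{00}&a_{10}\\ b_{01}&b_{11}\end{pmatrix}-\det\begin{pmatrix}a_{01}&a_{11}\\ b_{00}&b_{10}\end{pmatrix}\right)-4\det\begin{pmatrix}a_{00}&a_{01}\\ a_{10}&a_{11}\end{pmatrix}\det\begin{pmatrix}b_{00}&b_{01}\\ b_{10}&b_{11}\end{pmatrix}.\] Moreover this polynomial lies in the product ideal $I_1I_2$, where $I_1$ is the ideal generated by the $2\times2$ minors of the $4\times2$ matrix with rows $(a_{00},a_{01}),(a_{10},a_{11}),(b_{00},b_{01}),(b_{10},b_{11})$, and $I_2$ is the ideal generated by the $2\times2$ minors of the $4\times2$ matrix with rows $(a_{00},a_{10}),(a_{01},a_{11}),(b_{00},b_{10}),(b_{01},b_{11})$.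
   Context: The discriminant of a system of two bilinear equations on $\mathbb{P}^1\times\mathbb{P}^1$ is the irreducible polynomial (with coprime integer coefficients, defined up to sign) in the coefficients which vanishes whenever the system has a multiple (singular) common solution over $\mathbb{C}$, i.e. a common zero at which the $2\times2$ Jacobian with respect to the affine coordinates is singular. *)

theory Defs
  imports "HOL-Analysis.Derivative" "HOL-Library.Poly_Mapping" "HOL-Library.Numeral_Type"
    "HOL-Computational_Algebra.Factorial_Ring"
begin

text \<open>Integer polynomials in the eight coefficient indeterminates
  a00,a01,a10,a11,b00,b01,b10,b11, indexed by the numeral type 8:
  the coefficient of x_i y_j in F_(k+1) has index 4k+2i+j (k=0 for a, k=1 for b).\<close>

type_synonym ipoly = "(8 \<Rightarrow>\<^sub>0 nat) \<Rightarrow>\<^sub>0 int"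

definition cidx :: "nat \<Rightarrow> nat \<Rightarrow> nat \<Rightarrow> 8" where
  "cidx k i j = of_nat (4 * k + 2 * i + j)"

definition Var :: "8 \<Rightarrow> ipoly" where
  "Var v = Poly_Mapping.single (Poly_Mapping.single v 1) 1"

definition cvar :: "nat \<Rightarrow> nat \<Rightarrow> nat \<Rightarrow> ipoly" where
  "cvar k i j = Var (cidx k i j)"

definition eval :: "ipoly \<Rightarrow> (8 \<Rightarrow> complex) \<Rightarrow> complex" where
  "eval p c = (\<Sum>m\<in>Poly_Mapping.keys p.
      of_int (Poly_Mapping.lookup p m) * (\<Prod>v\<in>UNIV. c v ^ Poly_Mapping.lookup m v))"

definition F :: "(8 \<Rightarrow> complex) \<Rightarrow> nat \<Rightarrow> (nat \<Rightarrow> complex) \<Rightarrow> (nat \<Rightarrow> complex) \<Rightarrow> complex" where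
  "F c k x y = (\<Sum>i<2. \<Sum>j<2. c (cidx k i j) * x i * y j)"

definition chart :: "nat \<Rightarrow> complex \<Rightarrow> nat \<Rightarrow> complex" where
  "chart p s = (\<lambda>i. if i = p then 1 else s)"

text \<open>The system has a multiple (singular) common solution in P^1 x P^1:
  in some affine chart (p,q) of P^1 x P^1 there is a common zero (s,t) of the
  dehomogenised equations at which their 2x2 Jacobian w.r.t. (s,t) is singular.
  The charts p,q in {0,1} cover P^1 x P^1.\<close>
definition has_multiple_solution :: "(8 \<Rightarrow> complex) \<Rightarrow> bool" where
  "has_multiple_solution c \<longleftrightarrow>
     (\<exists>p<2. \<exists>q<2. \<exists>s t.
        (let f = (\<lambda>k s t. F c k (chart p s) (chart q t)) in
          f 0 s t = 0 \<and> f 1 s t = 0 \<and>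
          deriv (\<lambda>s'. f 0 s' t) s * deriv (\<lambda>t'. f 1 s t') t
          - deriv (\<lambda>t'. f 0 s t') t * deriv (\<lambda>s'. f 1 s' t) s = 0))"

definition vanishes_on_multiple :: "ipoly \<Rightarrow> bool" where
  "vanishes_on_multiple Q \<longleftrightarrow> (\<forall>c. has_multiple_solution c \<longrightarrow> eval Q c = 0)"

text \<open>D is a discriminant: an irreducible integer polynomial (hence with coprime
  coefficients) vanishing whenever the system has a multiple solution; the
  discriminant being "the" such polynomial up to sign, every other irreducible
  polynomial with this property is \<plusminus>D.\<close>
definition is_discriminant :: "ipoly \<Rightarrow> bool" where
  "is_discriminant D \<longleftrightarrow> irreducible D \<and> vanishes_on_multiple D \<and>
     (\<forall>Q. irreducible Q \<and> vanishes_on_multiple Q \<longrightarrow> Q = D \<or> Q = - D)"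

definition ideal_span :: "ipoly set \<Rightarrow> ipoly set" where
  "ideal_span S = {\<Sum>g\<in>G. h g * g | G h. finite G \<and> G \<subseteq> S}"

definition ideal_prod :: "ipoly set \<Rightarrow> ipoly set \<Rightarrow> ipoly set" where
  "ideal_prod I J = ideal_span {x * y | x y. x \<in> I \<and> y \<in> J}"

definition det2 :: "ipoly \<Rightarrow> ipoly \<Rightarrow> ipoly \<Rightarrow> ipoly \<Rightarrow> ipoly" where
  "det2 p q r s = p * s - q * r"

text \<open>Row u (u<4) of the first 4x2 matrix: (a00,a01),(a10,a11),(b00,b01),(b10,b11).\<close>
definition M1 :: "nat \<Rightarrow> nat \<Rightarrow> ipoly" where
  "M1 u col = cvar (u div 2) (u mod 2) col"

text \<open>Row u (u<4) of the second 4x2 matrix: (a00,a10),(a01,a11),(b00,b10),(b01,b11).\<close>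
definition M2 :: "nat \<Rightarrow> nat \<Rightarrow> ipoly" where
  "M2 u col = cvar (u div 2) col (u mod 2)"

definition minors_ideal :: "(nat \<Rightarrow> nat \<Rightarrow> ipoly) \<Rightarrow> ipoly set" where
  "minors_ideal M = ideal_span {det2 (M u 0) (M u 1) (M v 0) (M v 1) | u v. u < v \<and> v < 4}"

definition disc_poly :: ipoly where
  "disc_poly =
    (det2 (cvar 0 0 0) (cvar 0 0 1) (cvar 1 1 0) (cvar 1 1 1)
       - det2 (cvar 0 1 0) (cvar 0 1 1) (cvar 1 0 0) (cvar 1 0 1))
  * (det2 (cvar 0 0 0) (cvar 0 1 0) (cvar 1 0 1) (cvar 1 1 1)
       - det2 (cvar 0 0 1) (cvar 0 1 1) (cvar 1 0 0) (cvar 1 1 0))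
  - 4 * det2 (cvar 0 0 0) (cvar 0 0 1) (cvar 0 1 0) (cvar 0 1 1)
      * det2 (cvar 1 0 0) (cvar 1 0 1) (cvar 1 1 0) (cvar 1 1 1)"

end

theory Submission
  imports Defs "HOL-Computational_Algebra.Polynomial_Factorial"
begin

locale rh =
  fixes f :: "'a::comm_ring_1 \<Rightarrow> 'b::comm_ring_1"
  assumes add[simp]: "f (x + y) = f x + f y" and mul[simp]: "f (x * y) = f x * f y"
    and one[simp]: "f 1 = 1"
begin
lemma zero[simp]: "f 0 = 0"
  using add[of 0 0] by simp
lemma minus[simp]: "f (- x) = - f x"
  using add[of x "-x"] by (simp add: eq_neg_iff_add_eq_0 add.commute)
lemma diff[simp]: "f (x - y) = f x - f y"
  using add[of x "-y"] by simp
lemma power[simp]: "f (x ^ n) = f x ^ n"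
  by (induct n) auto
lemma sum[simp]: "f (sum g A) = sum (\<lambda>i. f (g i)) A"
  by (induct A rule: infinite_finite_induct) auto
lemma prod[simp]: "f (prod g A) = prod (\<lambda>i. f (g i)) A"
  by (induct A rule: infinite_finite_induct) auto
lemma hof_nat[simp]: "f (of_nat n) = of_nat n"
  by (induct n) auto
lemma hof_int[simp]: "f (of_int k) = of_int k"
  by (cases k) (simp_all add: hof_nat)
lemma hnumeral[simp]: "f (numeral n) = numeral n"
  using hof_nat[of "numeral n"] by simp
end

lemma rh_comp: "rh f \<Longrightarrow> rh g \<Longrightarrow> rh (g \<circ> f)"
  by (simp add: rh_def)

lemma map_poly_add_rh: "rh f \<Longrightarrow> map_poly f (p + q) = map_poly f p + map_poly f q"
  by (intro poly_eqI) (simp add: coeff_map_poly rh.zero rh.add)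

lemma map_poly_mult_rh: "rh f \<Longrightarrow> map_poly f (p * q) = map_poly f p * map_poly f q"
  by (intro poly_eqI) (simp add: coeff_map_poly rh.zero rh.mul rh.sum coeff_mult)

lemma rh_poly_map: assumes "rh f" shows "rh (\<lambda>p. poly (map_poly f p) x)"
  using assms by unfold_locales (simp_all add: map_poly_add_rh map_poly_mult_rh rh.one)

lemma rh_poly_hom: assumes "rh h" shows "h (poly r x) = poly (map_poly h r) (h x)"
  by (induct r) (simp_all add: assms rh.zero rh.add rh.mul map_poly_pCons)

definition hd0 :: "'r::zero list \<Rightarrow> 'r" where "hd0 xs = (case xs of [] \<Rightarrow> 0 | x # _ \<Rightarrow> x)"

lemma hd0_simps[simp]: "hd0 [] = 0" "hd0 (x # xs) = x" by (simp_all add: hd0_def)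

lemma hd0_map: "h 0 = 0 \<Longrightarrow> hd0 (map h xs) = h (hd0 xs)" by (cases xs) auto

definition lev :: "('a::zero \<Rightarrow> 'r list \<Rightarrow> 'r) \<Rightarrow> 'a poly \<Rightarrow> 'r list \<Rightarrow> 'r::comm_ring_1" where
  "lev E p xs = poly (map_poly (\<lambda>q. E q (tl xs)) p) (hd0 xs)"

lemma lev_rh: assumes "\<And>ys. rh (\<lambda>q. E q ys)" shows "rh (\<lambda>p. lev E p xs)"
  unfolding lev_def by (rule rh_poly_map[OF assms])

lemma lev_map:
  assumes h: "rh h" and E: "\<And>q ys. h (E1 q ys) = E2 q (map h ys)"
    and E1: "\<And>ys. rh (\<lambda>q. E1 q ys)"
  shows "h (lev E1 p xs) = lev E2 p (map h xs)"
proof -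
  have z: "E1 0 ys = 0" for ys using rh.zero[OF E1] .
  have "h (lev E1 p xs) = poly (map_poly h (map_poly (\<lambda>q. E1 q (tl xs)) p)) (h (hd0 xs))"
    unfolding lev_def by (rule rh_poly_hom[OF h])
  also have "map_poly h (map_poly (\<lambda>q. E1 q (tl xs)) p) = map_poly (\<lambda>q. E2 q (tl (map h xs))) p"
    by (subst map_poly_map_poly) (auto simp: z rh.zero[OF h] E map_tl intro!: map_poly_cong)
  finally show ?thesis by (simp add: lev_def hd0_map rh.zero[OF h])
qed

lemma lev_zero:
  assumes E: "\<And>q. (\<forall>ys. length ys = n \<longrightarrow> E q ys = (0::complex)) \<Longrightarrow> q = 0"
    and E0: "\<And>ys. E 0 ys = 0"
    and p: "\<forall>xs. length xs = Suc n \<longrightarrow> lev E p xs = 0"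
  shows "p = 0"
proof (rule poly_eqI)
  fix i
  have "\<forall>ys. length ys = n \<longrightarrow> E (coeff p i) ys = 0"
  proof (intro allI impI)
    fix ys :: "complex list" assume l: "length ys = n"
    have "\<forall>x. poly (map_poly (\<lambda>q. E q ys) p) x = 0"
      using p l by (auto simp: lev_def dest: spec[where x="_ # ys"])
    hence "map_poly (\<lambda>q. E q ys) p = 0" using poly_all_0_iff_0 by blast
    hence "coeff (map_poly (\<lambda>q. E q ys) p) i = 0" by simp
    thus "E (coeff p i) ys = 0" by (simp add: coeff_map_poly E0)
  qed
  thus "coeff p i = coeff 0 i" using E by simp
qed

definition ev0 :: "int \<Rightarrow> 'r list \<Rightarrow> 'r::comm_ring_1" where "ev0 k xs = of_int k"

type_synonym T1 = "int poly"
type_synonym T2 = "T1 poly"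
type_synonym T3 = "T2 poly"
type_synonym T4 = "T3 poly"
type_synonym T5 = "T4 poly"
type_synonym T6 = "T5 poly"
type_synonym T7 = "T6 poly"
type_synonym T8 = "T7 poly"

definition EV1 :: "T1 \<Rightarrow> 'r list \<Rightarrow> 'r::comm_ring_1" where "EV1 = lev ev0"
definition EV2 :: "T2 \<Rightarrow> 'r list \<Rightarrow> 'r::comm_ring_1" where "EV2 = lev EV1"
definition EV3 :: "T3 \<Rightarrow> 'r list \<Rightarrow> 'r::comm_ring_1" where "EV3 = lev EV2"
definition EV4 :: "T4 \<Rightarrow> 'r list \<Rightarrow> 'r::comm_ring_1" where "EV4 = lev EV3"
definition EV5 :: "T5 \<Rightarrow> 'r list \<Rightarrow> 'r::comm_ring_1" where "EV5 = lev EV4"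
definition EV6 :: "T6 \<Rightarrow> 'r list \<Rightarrow> 'r::comm_ring_1" where "EV6 = lev EV5"
definition EV7 :: "T7 \<Rightarrow> 'r list \<Rightarrow> 'r::comm_ring_1" where "EV7 = lev EV6"
definition EV8 :: "T8 \<Rightarrow> 'r list \<Rightarrow> 'r::comm_ring_1" where "EV8 = lev EV7"

lemma rh_ev0: "rh (\<lambda>q. ev0 q ys)" by unfold_locales (simp_all add: ev0_def)
lemma rh_EV1: "rh (\<lambda>q. EV1 q ys)" unfolding EV1_def by (rule lev_rh, rule rh_ev0)
lemma rh_EV2: "rh (\<lambda>q. EV2 q ys)" unfolding EV2_def by (rule lev_rh, rule rh_EV1)
lemma rh_EV3: "rh (\<lambda>q. EV3 q ys)" unfolding EV3_def by (rule lev_rh, rule rh_EV2)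
lemma rh_EV4: "rh (\<lambda>q. EV4 q ys)" unfolding EV4_def by (rule lev_rh, rule rh_EV3)
lemma rh_EV5: "rh (\<lambda>q. EV5 q ys)" unfolding EV5_def by (rule lev_rh, rule rh_EV4)
lemma rh_EV6: "rh (\<lambda>q. EV6 q ys)" unfolding EV6_def by (rule lev_rh, rule rh_EV5)
lemma rh_EV7: "rh (\<lambda>q. EV7 q ys)" unfolding EV7_def by (rule lev_rh, rule rh_EV6)
lemma rh_EV8: "rh (\<lambda>q. EV8 q ys)" unfolding EV8_def by (rule lev_rh, rule rh_EV7)


lemma EV1_map: "rh h \<Longrightarrow> h (EV1 q ys) = EV1 q (map h ys)"
  unfolding EV1_def by (rule lev_map, assumption, simp add: ev0_def rh.hof_int, rule rh_ev0)
lemma EV2_map: "rh h \<Longrightarrow> h (EV2 q ys) = EV2 q (map h ys)"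
  unfolding EV2_def by (rule lev_map, assumption, erule EV1_map, rule rh_EV1)
lemma EV3_map: "rh h \<Longrightarrow> h (EV3 q ys) = EV3 q (map h ys)"
  unfolding EV3_def by (rule lev_map, assumption, erule EV2_map, rule rh_EV2)
lemma EV4_map: "rh h \<Longrightarrow> h (EV4 q ys) = EV4 q (map h ys)"
  unfolding EV4_def by (rule lev_map, assumption, erule EV3_map, rule rh_EV3)
lemma EV5_map: "rh h \<Longrightarrow> h (EV5 q ys) = EV5 q (map h ys)"
  unfolding EV5_def by (rule lev_map, assumption, erule EV4_map, rule rh_EV4)
lemma EV6_map: "rh h \<Longrightarrow> h (EV6 q ys) = EV6 q (map h ys)"
  unfolding EV6_def by (rule lev_map, assumption, erule EV5_map, rule rh_EV5)
lemma EV7_map: "rh h \<Longrightarrow> h (EV7 q ys) = EV7 q (map h ys)"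
  unfolding EV7_def by (rule lev_map, assumption, erule EV6_map, rule rh_EV6)
lemma EV8_map: "rh h \<Longrightarrow> h (EV8 q ys) = EV8 q (map h ys)"
  unfolding EV8_def by (rule lev_map, assumption, erule EV7_map, rule rh_EV7)

lemma ev0_zero: "(\<forall>ys. length ys = 0 \<longrightarrow> ev0 q ys = (0::complex)) \<Longrightarrow> q = 0"
  by (auto simp: ev0_def)
lemma EV1_zero: "(\<forall>ys. length ys = 1 \<longrightarrow> EV1 q ys = (0::complex)) \<Longrightarrow> q = 0"
  unfolding EV1_def by (rule lev_zero[OF ev0_zero]) (auto simp: ev0_def)
lemma EV2_zero: "(\<forall>ys. length ys = 2 \<longrightarrow> EV2 q ys = (0::complex)) \<Longrightarrow> q = 0"
  unfolding EV2_def by (rule lev_zero[OF EV1_zero]) (auto simp: rh.zero[OF rh_EV1] numeral_eq_Suc)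
lemma EV3_zero: "(\<forall>ys. length ys = 3 \<longrightarrow> EV3 q ys = (0::complex)) \<Longrightarrow> q = 0"
  unfolding EV3_def by (rule lev_zero[OF EV2_zero]) (auto simp: rh.zero[OF rh_EV2] numeral_eq_Suc)
lemma EV4_zero: "(\<forall>ys. length ys = 4 \<longrightarrow> EV4 q ys = (0::complex)) \<Longrightarrow> q = 0"
  unfolding EV4_def by (rule lev_zero[OF EV3_zero]) (auto simp: rh.zero[OF rh_EV3] numeral_eq_Suc)
lemma EV5_zero: "(\<forall>ys. length ys = 5 \<longrightarrow> EV5 q ys = (0::complex)) \<Longrightarrow> q = 0"
  unfolding EV5_def by (rule lev_zero[OF EV4_zero]) (auto simp: rh.zero[OF rh_EV4] numeral_eq_Suc)
lemma EV6_zero: "(\<forall>ys. length ys = 6 \<longrightarrow> EV6 q ys = (0::complex)) \<Longrightarrow> q = 0"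
  unfolding EV6_def by (rule lev_zero[OF EV5_zero]) (auto simp: rh.zero[OF rh_EV5] numeral_eq_Suc)
lemma EV7_zero: "(\<forall>ys. length ys = 7 \<longrightarrow> EV7 q ys = (0::complex)) \<Longrightarrow> q = 0"
  unfolding EV7_def by (rule lev_zero[OF EV6_zero]) (auto simp: rh.zero[OF rh_EV6] numeral_eq_Suc)
lemma EV8_zero: "(\<forall>ys. length ys = 8 \<longrightarrow> EV8 q ys = (0::complex)) \<Longrightarrow> q = 0"
  unfolding EV8_def by (rule lev_zero[OF EV7_zero]) (auto simp: rh.zero[OF rh_EV7] numeral_eq_Suc)

definition mon :: "(8 \<Rightarrow> complex) \<Rightarrow> (8 \<Rightarrow>\<^sub>0 nat) \<Rightarrow> complex" where
  "mon c m = (\<Prod>v\<in>UNIV. c v ^ Poly_Mapping.lookup m v)"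

lemma eval_mon: "eval p c = (\<Sum>m\<in>Poly_Mapping.keys p. of_int (Poly_Mapping.lookup p m) * mon c m)"
  by (simp add: eval_def mon_def)

lemma mon_add: "mon c (m + n) = mon c m * mon c n"
  by (simp add: mon_def lookup_add power_add prod.distrib)

lemma mon_zero: "mon c 0 = 1" by (simp add: mon_def)

lemma eval_add: "eval (p + q) c = eval p c + eval q c"
  unfolding eval_mon by (rule setsum_keys_plus_distrib) (simp_all add: distrib_right)

lemma eval_uminus: "eval (- p) c = - eval p c"
  unfolding eval_mon by (simp add: sum_negf)

lemma eval_diff: "eval (p - q) c = eval p c - eval q c"
  using eval_add[of p "-q" c] by (simp add: eval_uminus)

lemma eval_single: "eval (Poly_Mapping.single m a) c = of_int a * mon c m"
  by (simp add: eval_mon)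

lemma eval_zero: "eval 0 c = 0" by (simp add: eval_mon)

lemma eval_mult_single: "eval (frag_of m * q) c = mon c m * eval q c"
proof (rule frag_induction[of q UNIV, where P = "\<lambda>q. eval (frag_of m * q) c = mon c m * eval q c"])
  show "eval (frag_of m * 0) c = mon c m * eval 0 c" by (simp add: eval_zero)
next
  fix x show "eval (frag_of m * frag_of x) c = mon c m * eval (frag_of x) c"
    by (simp add: mult_single eval_single mon_add)
next
  fix a b assume "eval (frag_of m * a) c = mon c m * eval a c" "eval (frag_of m * b) c = mon c m * eval b c"
  then show "eval (frag_of m * (a - b)) c = mon c m * eval (a - b) c"
    by (simp add: right_diff_distrib eval_diff)
qed auto

lemma eval_mult: "eval (p * q) c = eval p c * eval q c"
proof (rule frag_induction[of p UNIV, where P = "\<lambda>p. eval (p * q) c = eval p c * eval q c"])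
  show "eval (0 * q) c = eval 0 c * eval q c" by (simp add: eval_zero)
next
  fix x show "eval (frag_of x * q) c = eval (frag_of x) c * eval q c"
    by (simp add: eval_mult_single eval_single)
next
  fix a b assume "eval (a * q) c = eval a c * eval q c" "eval (b * q) c = eval b c * eval q c"
  then show "eval ((a - b) * q) c = eval (a - b) c * eval q c"
    by (simp add: left_diff_distrib eval_diff)
qed auto

lemma eval_one: "eval 1 c = 1"
  using eval_single[of 0 1 c] by (simp add: mon_zero)

lemma rh_eval: "rh (\<lambda>p. eval p c)"
  by unfold_locales (simp_all add: eval_add eval_mult eval_one)

lemma eval_Var: "eval (Var v) c = c v"
proof -
  have "mon c (Poly_Mapping.single v 1) = c v"
    unfolding mon_def by (subst prod.remove[of _ v]) (auto simp: lookup_single)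
  thus ?thesis by (simp add: Var_def eval_single)
qed

lemma lev_pCons: "(\<And>ys. E 0 ys = 0) \<Longrightarrow> lev E (pCons a p) xs = E a (tl xs) + hd0 xs * lev E p xs"
  by (simp add: lev_def map_poly_pCons)
lemma lev_0: "lev E 0 xs = 0" by (simp add: lev_def)

lemma EV_one[simp]: "EV1 1 xs = 1" "EV2 1 xs = 1" "EV3 1 xs = 1" "EV4 1 xs = 1"
  "EV5 1 xs = 1" "EV6 1 xs = 1" "EV7 1 xs = 1" "EV8 1 xs = 1"
  by (simp_all add: rh.one[OF rh_EV1] rh.one[OF rh_EV2] rh.one[OF rh_EV3] rh.one[OF rh_EV4]
     rh.one[OF rh_EV5] rh.one[OF rh_EV6] rh.one[OF rh_EV7] rh.one[OF rh_EV8])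

lemma EV_simps[simp]:
  "ev0 k xs = of_int k"
  "EV1 (pCons a1 p1) xs = ev0 a1 (tl xs) + hd0 xs * EV1 p1 xs"
  "EV2 (pCons a2 p2) xs = EV1 a2 (tl xs) + hd0 xs * EV2 p2 xs"
  "EV3 (pCons a3 p3) xs = EV2 a3 (tl xs) + hd0 xs * EV3 p3 xs"
  "EV4 (pCons a4 p4) xs = EV3 a4 (tl xs) + hd0 xs * EV4 p4 xs"
  "EV5 (pCons a5 p5) xs = EV4 a5 (tl xs) + hd0 xs * EV5 p5 xs"
  "EV6 (pCons a6 p6) xs = EV5 a6 (tl xs) + hd0 xs * EV6 p6 xs"
  "EV7 (pCons a7 p7) xs = EV6 a7 (tl xs) + hd0 xs * EV7 p7 xs"
  "EV8 (pCons a8 p8) xs = EV7 a8 (tl xs) + hd0 xs * EV8 p8 xs"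
  "EV1 0 xs = 0" "EV2 0 xs = 0" "EV3 0 xs = 0" "EV4 0 xs = 0"
  "EV5 0 xs = 0" "EV6 0 xs = 0" "EV7 0 xs = 0" "EV8 0 xs = 0"
  by (simp_all add: ev0_def EV1_def EV2_def EV3_def EV4_def EV5_def EV6_def EV7_def EV8_def lev_pCons lev_0
      rh.zero[OF rh_EV1[unfolded EV1_def]] rh.zero[OF rh_EV2[unfolded EV2_def EV1_def]]
      rh.zero[OF rh_EV3[unfolded EV3_def EV2_def EV1_def]]
      rh.zero[OF rh_EV4[unfolded EV4_def EV3_def EV2_def EV1_def]]
      rh.zero[OF rh_EV5[unfolded EV5_def EV4_def EV3_def EV2_def EV1_def]]
      rh.zero[OF rh_EV6[unfolded EV6_def EV5_def EV4_def EV3_def EV2_def EV1_def]]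
      rh.zero[OF rh_EV7[unfolded EV7_def EV6_def EV5_def EV4_def EV3_def EV2_def EV1_def]])

definition VL :: "ipoly list" where
  "VL = [Var 0, Var 1, Var 2, Var 3, Var 4, Var 5, Var 6, Var 7]"

definition psi :: "T8 \<Rightarrow> ipoly" where "psi p = EV8 p VL"

lemma rh_psi: "rh psi" unfolding psi_def by (rule rh_EV8)

definition clist :: "(8 \<Rightarrow> complex) \<Rightarrow> complex list" where
  "clist c = [c 0, c 1, c 2, c 3, c 4, c 5, c 6, c 7]"

lemma eval_psi: "eval (psi p) c = EV8 p (clist c)"
  unfolding psi_def using EV8_map[OF rh_eval, of p VL c]
  by (simp add: VL_def clist_def eval_Var)

lemma UNIV8: "(UNIV::8 set) = {0,1,2,3,4,5,6,7}"
proof -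
  have "card {0,1,2,3,4,5,6,7::8} = 8" by simp
  thus ?thesis by (intro card_subset_eq[symmetric]) auto
qed

lemma psi_inj: assumes "psi p = 0" shows "p = 0"
proof (rule EV8_zero, intro allI impI)
  fix ys :: "complex list" assume "length ys = 8"
  then obtain y0 y1 y2 y3 y4 y5 y6 y7 where ys: "ys = [y0,y1,y2,y3,y4,y5,y6,y7]"
    by (auto simp: length_Suc_conv numeral_eq_Suc)
  define c :: "8 \<Rightarrow> complex" where "c v = (if v = 0 then y0 else if v = 1 then y1 else if v = 2 then y2
     else if v = 3 then y3 else if v = 4 then y4 else if v = 5 then y5 else if v = 6 then y6 else y7)" for v
  have "clist c = ys" by (simp add: clist_def c_def ys)
  thus "EV8 p ys = 0" using eval_psi[of p c] assms by (simp add: eval_zero)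
qed

definition x0 :: T8 where "x0 = [:0, 1:]"
definition x1 :: T8 where "x1 = [:[:0, 1:]:]"
definition x2 :: T8 where "x2 = [:[:[:0, 1:]:]:]"
definition x3 :: T8 where "x3 = [:[:[:[:0, 1:]:]:]:]"
definition x4 :: T8 where "x4 = [:[:[:[:[:0, 1:]:]:]:]:]"
definition x5 :: T8 where "x5 = [:[:[:[:[:[:0, 1:]:]:]:]:]:]"
definition x6 :: T8 where "x6 = [:[:[:[:[:[:[:0, 1:]:]:]:]:]:]:]"
definition x7 :: T8 where "x7 = [:[:[:[:[:[:[:[:0, 1:]:]:]:]:]:]:]:]"

definition X8 :: "8 \<Rightarrow> T8" where "X8 v = (if v = 0 then x0 else if v = 1 then x1 else if v = 2 then x2 else if v = 3 then x3 else if v = 4 then x4 else if v = 5 then x5 else if v = 6 then x6 else x7)"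

lemma psi_X8: "psi (X8 v) = Var v"
proof -
  have "v \<in> {0,1,2,3,4,5,6,7}" using UNIV8 by auto
  thus ?thesis
    by (auto simp: X8_def psi_def VL_def x0_def x1_def x2_def x3_def x4_def x5_def x6_def x7_def)
qed

lemma Var_pow: "Var v ^ n = Poly_Mapping.single (Poly_Mapping.single v n) 1"
proof (induct n)
  case (Suc n) thus ?case by (simp add: Var_def mult_single single_add[symmetric] add.commute)
qed simp

lemma prod_single: "finite A \<Longrightarrow> (\<Prod>v\<in>A. Poly_Mapping.single (f v) (1::int)) = Poly_Mapping.single (\<Sum>v\<in>A. f v) 1"
  by (induct A rule: finite_induct) (simp_all add: mult_single)

lemma sum_single_lookup: "(\<Sum>v\<in>UNIV. Poly_Mapping.single v (Poly_Mapping.lookup m v)) = (m :: 8 \<Rightarrow>\<^sub>0 nat)"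
  by (rule poly_mapping_eqI) (simp add: lookup_sum lookup_single when_def)

lemma frag_of_prod: "frag_of m = (\<Prod>v\<in>UNIV. Var v ^ Poly_Mapping.lookup m v)"
  by (simp add: Var_pow prod_single sum_single_lookup)

lemma psi_surj: "\<exists>q. psi q = p"
proof (rule frag_induction[of p UNIV, where P = "\<lambda>p. \<exists>q. psi q = p"])
  show "\<exists>q. psi q = 0" using rh.zero[OF rh_psi] by blast
next
  fix m show "\<exists>q. psi q = frag_of m"
    by (rule exI[of _ "\<Prod>v\<in>UNIV. X8 v ^ Poly_Mapping.lookup m v"])
       (simp add: rh.prod[OF rh_psi] rh.power[OF rh_psi] psi_X8 frag_of_prod)
next
  fix a b assume "\<exists>q. psi q = a" "\<exists>q. psi q = b"
  then show "\<exists>q. psi q = a - b" using rh.diff[OF rh_psi] by metis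
qed auto

lemma bij_psi: "bij psi"
proof (rule bijI)
  show "inj psi"
  proof (rule injI)
    fix x y assume "psi x = psi y"
    hence "psi (x - y) = 0" by (simp add: rh.diff[OF rh_psi])
    thus "x = y" using psi_inj[of "x - y"] by simp
  qed
  show "surj psi" using psi_surj by (metis surjI)
qed

definition y1 :: T7 where "y1 = [:0, 1:]"
definition y2 :: T7 where "y2 = [:[:0, 1:]:]"
definition y3 :: T7 where "y3 = [:[:[:0, 1:]:]:]"
definition y4 :: T7 where "y4 = [:[:[:[:0, 1:]:]:]:]"
definition y5 :: T7 where "y5 = [:[:[:[:[:0, 1:]:]:]:]:]"
definition y6 :: T7 where "y6 = [:[:[:[:[:[:0, 1:]:]:]:]:]:]"
definition y7 :: T7 where "y7 = [:[:[:[:[:[:[:0, 1:]:]:]:]:]:]:]"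

lemmas ydefs = y1_def y2_def y3_def y4_def y5_def y6_def y7_def

definition ell7 :: T7 where "ell7 = y7^2"
definition beta7 :: T7 where
  "beta7 = 4*y3*y5*y6 - 2*y3*y4*y7 - 2*y2*y5*y7 - 2*y1*y6*y7"
definition gamma7 :: T7 where
  "gamma7 = y3^2*y4^2 - 2*y2*y3*y4*y5 + y2^2*y5^2 - 2*y1*y3*y4*y6 - 2*y1*y2*y5*y6
     + 4*y1*y2*y4*y7 + y1^2*y6^2"

definition Det8 :: T8 where "Det8 = [:gamma7, beta7, ell7:]"

lemma EV7_y: "EV7 y1 (z1#z2#z3#z4#z5#z6#z7#zs) = z1" "EV7 y2 (z1#z2#z3#z4#z5#z6#z7#zs) = z2"
  "EV7 y3 (z1#z2#z3#z4#z5#z6#z7#zs) = z3" "EV7 y4 (z1#z2#z3#z4#z5#z6#z7#zs) = z4"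
  "EV7 y5 (z1#z2#z3#z4#z5#z6#z7#zs) = z5" "EV7 y6 (z1#z2#z3#z4#z5#z6#z7#zs) = z6"
  "EV7 y7 (z1#z2#z3#z4#z5#z6#z7#zs) = z7"
  by (simp_all add: ydefs)

lemmas EV7h = rh.add[OF rh_EV7] rh.mul[OF rh_EV7] rh.diff[OF rh_EV7] rh.power[OF rh_EV7]
  rh.hnumeral[OF rh_EV7] rh.minus[OF rh_EV7] rh.one[OF rh_EV7] rh.zero[OF rh_EV7]

lemma EV8_Det8: "EV8 Det8 (z0#z1#z2#z3#z4#z5#z6#z7#zs) =
  (z0*z7 - z1*z6 - (z2*z5 - z3*z4)) * (z0*z7 - z2*z5 - (z1*z6 - z3*z4)) - 4*(z0*z3 - z1*z2)*(z4*z7-z5*z6)"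
  by (simp add: Det8_def EV7h EV7_y ell7_def beta7_def gamma7_def) (simp add: algebra_simps power2_eq_square)

lemma psi_Det8: "psi Det8 = disc_poly"
proof -
  have "psi Det8 = EV8 Det8 VL" by (simp add: psi_def)
  also have "\<dots> = disc_poly"
    unfolding VL_def EV8_Det8 disc_poly_def det2_def cvar_def cidx_def by (simp add: algebra_simps)
  finally show ?thesis .
qed

lemma prime_y7: "prime_elem y7"
proof -
  have "prime_elem [:0, 1::int:]" by (rule prime_elem_linear_poly) auto
  thus ?thesis unfolding y7_def by (simp add: prime_elem_const_poly_iff)
qed

lemma y7_ne0: "y7 \<noteq> 0" using prime_y7 by auto

lemma gamma7_not_dvd: "\<not> y7 dvd gamma7"
proof
  assume "y7 dvd gamma7"
  then obtain w where w: "gamma7 = y7 * w" by auto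
  have "EV7 gamma7 [0,0,1,1,0,0,0::complex] = EV7 y7 [0,0,1,1,0,0,0::complex] * EV7 w [0,0,1,1,0,0,0::complex]"
    by (simp add: w EV7h)
  thus False by (simp add: EV7h EV7_y gamma7_def)
qed

lemma dvd_y7sq_gamma: assumes "p dvd y7^2" "p dvd gamma7" shows "is_unit p"
proof (rule ccontr)
  assume nu: "\<not> is_unit p"
  have "p \<noteq> 0" using assms(1) y7_ne0 by auto
  then obtain q where q: "q dvd p" "prime q" using prime_divisor_exists nu by blast
  have "q dvd y7^2" using q assms(1) dvd_trans by blast
  hence "q dvd y7" using q(2) by (simp add: prime_elem_dvd_power prime_def)
  then obtain w where w: "y7 = q * w" by auto
  have "irreducible y7" using prime_y7 by (simp add: prime_elem_imp_irreducible)
  hence "is_unit q \<or> is_unit w" using w by (auto simp: irreducible_def)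
  hence "is_unit w" using q(2) by (auto simp: prime_def)
  hence "y7 dvd q" using w by (metis dvd_mult_unit_iff dvd_refl mult.commute)
  hence "y7 dvd gamma7" using q(1) assms(2) dvd_trans by blast
  thus False using gamma7_not_dvd by simp
qed

lemma deg0_case: assumes "Det8 = P * R" "degree P = 0" shows "is_unit P"
proof -
  obtain p where P: "P = [:p:]" using assms(2) by (metis degree_eq_zeroE)
  have "coeff Det8 n = p * coeff R n" for n
  proof -
    have "coeff Det8 n = coeff (P * R) n" using assms(1) by simp
    thus ?thesis using P by simp
  qed
  hence "p dvd coeff Det8 2" "p dvd coeff Det8 0" by auto
  hence "p dvd y7^2" "p dvd gamma7" by (simp_all add: Det8_def ell7_def numeral_2_eq_2)
  hence "is_unit p" by (rule dvd_y7sq_gamma)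
  thus ?thesis using P by (simp add: is_unit_poly_iff)
qed

lemma m16: "(-16 :: int poly) = [:-16:]" by (simp add: numeral_poly)

definition LL :: "int poly list" where "LL = [1, 1, 0, [:0,1:], 0, 0, 1]"

lemma Delta_not_square: "beta7^2 - 4*ell7*gamma7 \<noteq> h^2"
proof
  assume a: "beta7^2 - 4*ell7*gamma7 = h^2"
  have "EV7 (beta7^2 - 4*ell7*gamma7) LL = [:0, -16:]"
    by (simp add: LL_def EV7h EV7_y beta7_def ell7_def gamma7_def) (simp add: m16)
  hence e: "EV7 h LL ^ 2 = [:0, -16:]" using a by (simp add: EV7h)
  hence "EV7 h LL \<noteq> 0" by auto
  hence "degree (EV7 h LL ^ 2) = 2 * degree (EV7 h LL)" by (simp add: degree_power_eq)
  thus False using e by simp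
qed

lemma deg1_case: assumes "Det8 = P * R" "degree P = 1" "degree R = 1" shows False
proof -
  have P: "P = [:coeff P 0, coeff P 1:]"
    by (rule poly_eqI) (auto simp: coeff_pCons coeff_eq_0 assms(2) split: nat.splits)
  have R: "R = [:coeff R 0, coeff R 1:]"
    by (rule poly_eqI) (auto simp: coeff_pCons coeff_eq_0 assms(3) split: nat.splits)
  define p0 p1 r0 r1 where "p0 = coeff P 0" "p1 = coeff P 1" "r0 = coeff R 0" "r1 = coeff R 1"
  have "[:gamma7, beta7, ell7:] = [:p0, p1:] * [:r0, r1:]"
    using assms(1) P R p0_p1_r0_r1_def by (simp add: Det8_def)
  hence e: "gamma7 = p0 * r0" "beta7 = p0 * r1 + p1 * r0" "ell7 = p1 * r1"
    by (simp_all add: algebra_simps)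
  have "beta7^2 - 4*ell7*gamma7 = (p0 * r1 - p1 * r0)^2"
    unfolding e by algebra
  thus False using Delta_not_square by blast
qed

lemma Det8_ne0: "Det8 \<noteq> 0" using y7_ne0 by (simp add: Det8_def ell7_def)

lemma degree_Det8: "degree Det8 = 2" using y7_ne0 by (simp add: Det8_def ell7_def)

lemma irreducible_Det8: "irreducible Det8"
proof (rule irreducibleI)
  show "Det8 \<noteq> 0" by (rule Det8_ne0)
  show "\<not> is_unit Det8"
  proof
    assume "is_unit Det8"
    then obtain c where "Det8 = [:c:]" unfolding is_unit_poly_iff by blast
    thus False using degree_Det8 by (metis degree_pCons_0 zero_neq_numeral)
  qed
  fix P R assume a: "Det8 = P * R"
  hence nz: "P \<noteq> 0" "R \<noteq> 0" using Det8_ne0 by auto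
  hence "degree P + degree R = 2" using a degree_Det8 by (metis degree_mult_eq)
  hence "degree P = 0 \<or> degree R = 0 \<or> (degree P = 1 \<and> degree R = 1)" by auto
  thus "is_unit P \<or> is_unit R"
  proof (elim disjE conjE)
    assume "degree P = 0" thus ?thesis using deg0_case a by blast
  next
    assume "degree R = 0" thus ?thesis using deg0_case[of R P] a by (simp add: mult.commute)
  next
    assume "degree P = 1" "degree R = 1" thus ?thesis using deg1_case a by blast
  qed
qed

definition DetF :: "complex \<Rightarrow> complex \<Rightarrow> complex \<Rightarrow> complex \<Rightarrow> complex \<Rightarrow> complex \<Rightarrow> complex \<Rightarrow> complex \<Rightarrow> complex" where
  "DetF z0 z1 z2 z3 z4 z5 z6 z7 =
  (z0*z7 - z1*z6 - (z2*z5 - z3*z4)) * (z0*z7 - z2*z5 - (z1*z6 - z3*z4)) - 4*(z0*z3 - z1*z2)*(z4*z7-z5*z6)"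

lemma eval_disc: "eval disc_poly c = DetF (c 0) (c 1) (c 2) (c 3) (c 4) (c 5) (c 6) (c 7)"
  by (simp add: psi_Det8[symmetric] eval_psi clist_def EV8_Det8 DetF_def)

lemma lm_exists: fixes G0 G1 H0 H1 :: complex
  assumes "G0*H1 - H0*G1 = 0"
  shows "\<exists>l m. (l \<noteq> 0 \<or> m \<noteq> 0) \<and> l*G0 + m*G1 = 0 \<and> l*H0 + m*H1 = 0"
proof (cases "G1 \<noteq> 0 \<or> G0 \<noteq> 0")
  case True thus ?thesis using assms
    by (intro exI[of _ G1] exI[of _ "-G0"]) (auto simp: algebra_simps)
next
  case False note F = this
  show ?thesis
  proof (cases "H1 \<noteq> 0 \<or> H0 \<noteq> 0")
    case True thus ?thesis using assms F
      by (intro exI[of _ H1] exI[of _ "-H0"]) (auto simp: algebra_simps)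
  next
    case False thus ?thesis using F by (intro exI[of _ 1] exI[of _ 0]) auto
  qed
qed

lemma core: fixes a00 a01 a10 a11 b00 b01 b10 b11 l m :: complex
  defines "m00 \<equiv> l*a00 + m*b00" and "m01 \<equiv> l*a01 + m*b01"
    and "m10 \<equiv> l*a10 + m*b10" and "m11 \<equiv> l*a11 + m*b11"
  assumes "l \<noteq> 0 \<or> m \<noteq> 0"
    and TA: "m11*a00 - m10*a01 - m01*a10 + m00*a11 = 0"
    and TB: "m11*b00 - m10*b01 - m01*b10 + m00*b11 = 0"
  shows "DetF a00 a01 a10 a11 b00 b01 b10 b11 = 0"
proof -
  define L where "L = a00*b11 - a01*b10 - a10*b01 + a11*b00"
  define dA where "dA = a00*a11 - a01*a10"
  define dB where "dB = b00*b11 - b01*b10"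
  have eA: "m11*a00 - m10*a01 - m01*a10 + m00*a11 = 2*l*dA + m*L"
    unfolding m00_def m01_def m10_def m11_def L_def dA_def by (simp add: algebra_simps)
  have eB: "m11*b00 - m10*b01 - m01*b10 + m00*b11 = l*L + 2*m*dB"
    unfolding m00_def m01_def m10_def m11_def L_def dB_def by (simp add: algebra_simps)
  have D: "DetF a00 a01 a10 a11 b00 b01 b10 b11 = L^2 - 4*dA*dB"
    unfolding DetF_def L_def dA_def dB_def by (simp add: algebra_simps power2_eq_square)
  have "(L^2 - 4*dA*dB) * l = L*(l*L + 2*m*dB) - 2*dB*(2*l*dA + m*L)"
    by (simp add: algebra_simps power2_eq_square)
  hence "(L^2 - 4*dA*dB) * l = 0" using TA TB eA eB by simp
  moreover have "(L^2 - 4*dA*dB) * m = L*(2*l*dA + m*L) - 2*dA*(l*L + 2*m*dB)"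
    by (simp add: algebra_simps power2_eq_square)
  hence "(L^2 - 4*dA*dB) * m = 0" using TA TB eA eB by simp
  ultimately show ?thesis using assms(5) D by auto
qed

lemma ch00: fixes a00 a01 a10 a11 b00 b01 b10 b11 s t :: complex
  assumes F0: "a00 + a01*t + a10 * s + a11*(s*t) = 0" and F1: "b00 + b01*t + b10 * s + b11*(s*t) = 0"
    and J: "(a10 + a11*t)*(b01 + b11 * s) - (a01 + a11 * s)*(b10 + b11*t) = 0"
  shows "DetF a00 a01 a10 a11 b00 b01 b10 b11 = 0"
proof -
  obtain l m where lm: "l \<noteq> 0 \<or> m \<noteq> 0" and r1: "l*(a10 + a11*t) + m*(b10 + b11*t) = 0"
    and r2: "l*(a01 + a11 * s) + m*(b01 + b11 * s) = 0"
    using lm_exists[of "a10 + a11*t" "b01 + b11 * s" "a01 + a11 * s" "b10 + b11*t"] J by auto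
  define m00 where "m00 = l*a00 + m*b00"
  define m01 where "m01 = l*a01 + m*b01"
  define m10 where "m10 = l*a10 + m*b10"
  define m11 where "m11 = l*a11 + m*b11"
  define r0 where "r0 = l*(a00 + a01*t + a10 * s + a11*(s*t)) + m*(b00 + b01*t + b10 * s + b11*(s*t))"
  have r0z: "r0 = 0" using F0 F1 by (simp add: r0_def)
  have "m11*a00 - m10*a01 - m01*a10 + m00*a11 = a11*r0 - (a01 + s*a11)*(l*(a10 + a11*t) + m*(b10 + b11*t))
      - (a10 + t*a11)*(l*(a01 + a11 * s) + m*(b01 + b11 * s)) + m11*(a00 + a01*t + a10 * s + a11*(s*t))"
    unfolding m00_def m01_def m10_def m11_def r0_def by (simp add: algebra_simps)
  hence TA: "m11*a00 - m10*a01 - m01*a10 + m00*a11 = 0" using r0z r1 r2 F0 by simp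
  have "m11*b00 - m10*b01 - m01*b10 + m00*b11 = b11*r0 - (b01 + s*b11)*(l*(a10 + a11*t) + m*(b10 + b11*t))
      - (b10 + t*b11)*(l*(a01 + a11 * s) + m*(b01 + b11 * s)) + m11*(b00 + b01*t + b10 * s + b11*(s*t))"
    unfolding m00_def m01_def m10_def m11_def r0_def by (simp add: algebra_simps)
  hence TB: "m11*b00 - m10*b01 - m01*b10 + m00*b11 = 0" using r0z r1 r2 F1 by simp
  show ?thesis using core[OF lm] TA TB unfolding m00_def m01_def m10_def m11_def by blast
qed

lemma DetF_swap_i: "DetF a10 a11 a00 a01 b10 b11 b00 b01 = DetF a00 a01 a10 a11 b00 b01 b10 b11"
  by (simp add: DetF_def algebra_simps)
lemma DetF_swap_j: "DetF a01 a00 a11 a10 b01 b00 b11 b10 = DetF a00 a01 a10 a11 b00 b01 b10 b11"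
  by (simp add: DetF_def algebra_simps)

lemma F_expand: "F c k x y = c (cidx k 0 0) * x 0 * y 0 + c (cidx k 0 1) * x 0 * y 1
   + c (cidx k 1 0) * x 1 * y 0 + c (cidx k 1 1) * x 1 * y 1"
  by (simp add: F_def numeral_2_eq_2 lessThan_Suc)

lemma deriv_affine: "deriv (\<lambda>s. u + s * v) x = (v::complex)"
  by (rule DERIV_imp_deriv) (auto intro!: derivative_eq_intros)

lemma dF_s: assumes "p < 2"
  shows "deriv (\<lambda>s'. F c k (chart p s') y) s = c (cidx k (1-p) 0) * y 0 + c (cidx k (1-p) 1) * y 1"
proof -
  have "(\<lambda>s'. F c k (chart p s') y) = (\<lambda>s'. (c (cidx k p 0) * y 0 + c (cidx k p 1) * y 1)
     + s' * (c (cidx k (1-p) 0) * y 0 + c (cidx k (1-p) 1) * y 1))"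
  proof -
    have "p = 0 \<or> p = 1" using assms by auto
    thus ?thesis by (elim disjE) (auto intro!: ext simp: F_expand chart_def algebra_simps)
  qed
  thus ?thesis by (simp add: deriv_affine)
qed

lemma dF_t: assumes "q < 2"
  shows "deriv (\<lambda>t'. F c k x (chart q t')) t = c (cidx k 0 (1-q)) * x 0 + c (cidx k 1 (1-q)) * x 1"
proof -
  have "(\<lambda>t'. F c k x (chart q t')) = (\<lambda>t'. (c (cidx k 0 q) * x 0 + c (cidx k 1 q) * x 1)
     + t' * (c (cidx k 0 (1-q)) * x 0 + c (cidx k 1 (1-q)) * x 1))"
  proof -
    have "q = 0 \<or> q = 1" using assms by auto
    thus ?thesis by (elim disjE) (auto intro!: ext simp: F_expand chart_def algebra_simps)
  qed
  thus ?thesis by (simp add: deriv_affine)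
qed

lemma cidx_vals: "cidx 0 0 0 = 0" "cidx 0 0 1 = 1" "cidx 0 1 0 = 2" "cidx 0 1 1 = 3"
  "cidx 1 0 0 = 4" "cidx 1 0 1 = 5" "cidx 1 1 0 = 6" "cidx 1 1 1 = 7"
  by (simp_all add: cidx_def)

lemma hms_vanish: assumes "has_multiple_solution c"
  shows "DetF (c 0) (c 1) (c 2) (c 3) (c 4) (c 5) (c 6) (c 7) = 0"
proof -
  obtain p q s t where pq: "p < 2" "q < 2" and
    h0: "F c 0 (chart p s) (chart q t) = 0" and h1: "F c 1 (chart p s) (chart q t) = 0" and
    hJ: "deriv (\<lambda>s'. F c 0 (chart p s') (chart q t)) s * deriv (\<lambda>t'. F c 1 (chart p s) (chart q t')) t
       - deriv (\<lambda>t'. F c 0 (chart p s) (chart q t')) t * deriv (\<lambda>s'. F c 1 (chart p s') (chart q t)) s = 0"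
    using assms unfolding has_multiple_solution_def Let_def by blast
  note hJ' = hJ[unfolded dF_s[OF pq(1)] dF_t[OF pq(2)]]
  have "p = 0 \<or> p = 1" "q = 0 \<or> q = 1" using pq by auto
  thus ?thesis
  proof (elim disjE)
    assume "p = 0" "q = 0"
    thus ?thesis using h0 h1 hJ'
      by (intro ch00[of _ _ t _ s]) (auto simp: F_expand chart_def cidx_def algebra_simps)
  next
    assume "p = 0" "q = 1"
    hence "DetF (c 1) (c 0) (c 3) (c 2) (c 5) (c 4) (c 7) (c 6) = 0" using h0 h1 hJ'
      by (intro ch00[of _ _ t _ s]) (auto simp: F_expand chart_def cidx_def algebra_simps)
    thus ?thesis by (simp add: DetF_swap_j)
  next
    assume "p = 1" "q = 0"
    hence "DetF (c 2) (c 3) (c 0) (c 1) (c 6) (c 7) (c 4) (c 5) = 0" using h0 h1 hJ'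
      by (intro ch00[of _ _ t _ s]) (auto simp: F_expand chart_def cidx_def algebra_simps)
    thus ?thesis by (simp add: DetF_swap_i)
  next
    assume "p = 1" "q = 1"
    hence "DetF (c 3) (c 2) (c 1) (c 0) (c 7) (c 6) (c 5) (c 4) = 0" using h0 h1 hJ'
      by (intro ch00[of _ _ t _ s]) (auto simp: F_expand chart_def cidx_def algebra_simps)
    thus ?thesis using DetF_swap_i DetF_swap_j by metis
  qed
qed

lemma disc_vanishes: "vanishes_on_multiple disc_poly"
  unfolding vanishes_on_multiple_def eval_disc using hms_vanish by blast

lemma hms_intro:
  assumes "c 0 + c 1 * t + c 2 * s + c 3 * (s * t) = 0"
    and "c 4 + c 5 * t + c 6 * s + c 7 * (s * t) = 0"
    and "(c 2 + c 3 * t) * (c 5 + c 7 * s) - (c 1 + c 3 * s) * (c 6 + c 7 * t) = 0"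
  shows "has_multiple_solution c"
  unfolding has_multiple_solution_def Let_def
  apply (rule exI[of _ 0], simp, rule exI[of _ 0], simp, rule exI[of _ s], rule exI[of _ t])
  apply (simp only: dF_s[of 0, simplified] dF_t[of 0, simplified])
  using assms by (simp add: dF_s dF_t F_expand chart_def cidx_def algebra_simps)

lemma pt_sol: fixes aa ab ac ba bb bc bd s t w :: complex
  defines "j0 \<equiv> ab*bb - aa*bc" and "j1 \<equiv> ab*bd - ac*bc" and "j2 \<equiv> ac*bb - aa*bd"
  defines "q2 \<equiv> -bd*j1" and "q1 \<equiv> bc*j2 - bb*j1 - bd*j0" and "q0 \<equiv> ba*j2 - bb*j0"
  assumes w: "w^2 = q1^2 - 4*q2*q0" and q2: "q2 \<noteq> 0" and j2: "j2 \<noteq> 0"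
    and s: "s = (-q1 + w)/(2*q2)" and t: "t = -(j0 + j1 * s)/j2"
  shows "ba + bb*t + bc * s + bd*(s * t) = 0"
    and "(ab + ac*t)*(bb + bd * s) - (aa + ac * s)*(bc + bd*t) = 0"
proof -
  have lin: "j2*t + j0 + j1 * s = 0" using j2 t by (simp add: field_simps)
  have "2*q2 * s + q1 = w" using q2 s by (simp add: field_simps)
  hence "(2*q2 * s + q1)^2 = q1^2 - 4*q2*q0" using w by simp
  hence "4*q2*(q2 * s^2 + q1 * s + q0) = 0" by (simp add: algebra_simps power2_eq_square)
  hence Q: "q2 * s^2 + q1 * s + q0 = 0" using q2 by simp
  have "j2*(ba + bb*t + bc * s + bd*(s * t)) = (q2 * s^2 + q1 * s + q0) + (bb + bd * s)*(j2*t + j0 + j1 * s)"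
    unfolding q2_def q1_def q0_def by (simp add: algebra_simps power2_eq_square)
  thus "ba + bb*t + bc * s + bd*(s * t) = 0" using Q lin j2 by simp
  have "(ab + ac*t)*(bb + bd * s) - (aa + ac * s)*(bc + bd*t) = j2*t + j0 + j1 * s"
    unfolding j0_def j1_def j2_def by (simp add: algebra_simps)
  thus "(ab + ac*t)*(bb + bd * s) - (aa + ac * s)*(bc + bd*t) = 0" using lin by simp
qed

lemma x_formula: fixes aa ab ac ba bb bc bd s t :: complex
  defines "j0 \<equiv> ab*bb - aa*bc" and "j1 \<equiv> ab*bd - ac*bc" and "j2 \<equiv> ac*bb - aa*bd"
  assumes j2: "j2 \<noteq> 0" and t: "t = -(j0 + j1 * s)/j2"
  shows "j2 * (-(aa*t + ab * s + ac*(s * t))) = (ac*j1) * s^2 + (aa*j1 - ab*j2 + ac*j0) * s + aa*j0"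
proof -
  have lin: "j2*t + j0 + j1 * s = 0" using j2 t by (simp add: field_simps)
  have "j2 * (-(aa*t + ab * s + ac*(s * t))) = (ac*j1) * s^2 + (aa*j1 - ab*j2 + ac*j0) * s + aa*j0
        - (aa + ac * s) * (j2*t + j0 + j1 * s)"
    by (simp add: algebra_simps power2_eq_square)
  thus ?thesis using lin by simp
qed


definition j0f :: "'a::comm_ring_1 \<Rightarrow> 'a \<Rightarrow> 'a \<Rightarrow> 'a \<Rightarrow> 'a \<Rightarrow> 'a \<Rightarrow> 'a \<Rightarrow> 'a" where
  "j0f z1 z2 z3 z4 z5 z6 z7 = z2*z5 - z1*z6"
definition j1f :: "'a::comm_ring_1 \<Rightarrow> 'a \<Rightarrow> 'a \<Rightarrow> 'a \<Rightarrow> 'a \<Rightarrow> 'a \<Rightarrow> 'a \<Rightarrow> 'a" where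
  "j1f z1 z2 z3 z4 z5 z6 z7 = z2*z7 - z3*z6"
definition j2f :: "'a::comm_ring_1 \<Rightarrow> 'a \<Rightarrow> 'a \<Rightarrow> 'a \<Rightarrow> 'a \<Rightarrow> 'a \<Rightarrow> 'a \<Rightarrow> 'a" where
  "j2f z1 z2 z3 z4 z5 z6 z7 = z3*z5 - z1*z7"
definition q2f :: "'a::comm_ring_1 \<Rightarrow> 'a \<Rightarrow> 'a \<Rightarrow> 'a \<Rightarrow> 'a \<Rightarrow> 'a \<Rightarrow> 'a \<Rightarrow> 'a" where
  "q2f z1 z2 z3 z4 z5 z6 z7 = - z7 * j1f z1 z2 z3 z4 z5 z6 z7"
definition q1f :: "'a::comm_ring_1 \<Rightarrow> 'a \<Rightarrow> 'a \<Rightarrow> 'a \<Rightarrow> 'a \<Rightarrow> 'a \<Rightarrow> 'a \<Rightarrow> 'a" where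
  "q1f z1 z2 z3 z4 z5 z6 z7 = z6 * j2f z1 z2 z3 z4 z5 z6 z7 - z5 * j1f z1 z2 z3 z4 z5 z6 z7 - z7 * j0f z1 z2 z3 z4 z5 z6 z7"
definition q0f :: "'a::comm_ring_1 \<Rightarrow> 'a \<Rightarrow> 'a \<Rightarrow> 'a \<Rightarrow> 'a \<Rightarrow> 'a \<Rightarrow> 'a \<Rightarrow> 'a" where
  "q0f z1 z2 z3 z4 z5 z6 z7 = z4 * j2f z1 z2 z3 z4 z5 z6 z7 - z5 * j0f z1 z2 z3 z4 z5 z6 z7"
definition Df :: "'a::comm_ring_1 \<Rightarrow> 'a \<Rightarrow> 'a \<Rightarrow> 'a \<Rightarrow> 'a \<Rightarrow> 'a \<Rightarrow> 'a \<Rightarrow> 'a" where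
  "Df z1 z2 z3 z4 z5 z6 z7 = (q1f z1 z2 z3 z4 z5 z6 z7)^2 - 4 * q2f z1 z2 z3 z4 z5 z6 z7 * q0f z1 z2 z3 z4 z5 z6 z7"
definition e2f :: "'a::comm_ring_1 \<Rightarrow> 'a \<Rightarrow> 'a \<Rightarrow> 'a \<Rightarrow> 'a \<Rightarrow> 'a \<Rightarrow> 'a \<Rightarrow> 'a" where
  "e2f z1 z2 z3 z4 z5 z6 z7 = z3 * j1f z1 z2 z3 z4 z5 z6 z7"
definition e1f :: "'a::comm_ring_1 \<Rightarrow> 'a \<Rightarrow> 'a \<Rightarrow> 'a \<Rightarrow> 'a \<Rightarrow> 'a \<Rightarrow> 'a \<Rightarrow> 'a" where
  "e1f z1 z2 z3 z4 z5 z6 z7 = z1 * j1f z1 z2 z3 z4 z5 z6 z7 - z2 * j2f z1 z2 z3 z4 z5 z6 z7 + z3 * j0f z1 z2 z3 z4 z5 z6 z7"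
definition Wf :: "'a::comm_ring_1 \<Rightarrow> 'a \<Rightarrow> 'a \<Rightarrow> 'a \<Rightarrow> 'a \<Rightarrow> 'a \<Rightarrow> 'a \<Rightarrow> 'a" where
  "Wf z1 z2 z3 z4 z5 z6 z7 = e1f z1 z2 z3 z4 z5 z6 z7 * q2f z1 z2 z3 z4 z5 z6 z7 - e2f z1 z2 z3 z4 z5 z6 z7 * q1f z1 z2 z3 z4 z5 z6 z7"
definition genf :: "'a::comm_ring_1 \<Rightarrow> 'a \<Rightarrow> 'a \<Rightarrow> 'a \<Rightarrow> 'a \<Rightarrow> 'a \<Rightarrow> 'a \<Rightarrow> 'a" where
  "genf z1 z2 z3 z4 z5 z6 z7 = j2f z1 z2 z3 z4 z5 z6 z7 * q2f z1 z2 z3 z4 z5 z6 z7 * Df z1 z2 z3 z4 z5 z6 z7 * Wf z1 z2 z3 z4 z5 z6 z7"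

lemmas gdefs = j0f_def j1f_def j2f_def q2f_def q1f_def q0f_def Df_def e2f_def e1f_def Wf_def genf_def

lemma genf_rh: "rh h \<Longrightarrow> h (genf z1 z2 z3 z4 z5 z6 z7) = genf (h z1) (h z2) (h z3) (h z4) (h z5) (h z6) (h z7)"
  by (simp add: gdefs rh.add rh.mul rh.diff rh.power rh.minus rh.hnumeral)

definition cv :: "complex \<Rightarrow> complex \<Rightarrow> complex \<Rightarrow> complex \<Rightarrow> complex \<Rightarrow> complex \<Rightarrow> complex \<Rightarrow> complex \<Rightarrow> 8 \<Rightarrow> complex" where
  "cv x z1 z2 z3 z4 z5 z6 z7 v = (if v = 0 then x else if v = 1 then z1 else if v = 2 then z2 else if v = 3 then z3
     else if v = 4 then z4 else if v = 5 then z5 else if v = 6 then z6 else z7)"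

lemma cv_simps[simp]: "cv x z1 z2 z3 z4 z5 z6 z7 0 = x" "cv x z1 z2 z3 z4 z5 z6 z7 1 = z1"
  "cv x z1 z2 z3 z4 z5 z6 z7 2 = z2" "cv x z1 z2 z3 z4 z5 z6 z7 3 = z3" "cv x z1 z2 z3 z4 z5 z6 z7 4 = z4"
  "cv x z1 z2 z3 z4 z5 z6 z7 5 = z5" "cv x z1 z2 z3 z4 z5 z6 z7 6 = z6" "cv x z1 z2 z3 z4 z5 z6 z7 7 = z7"
  by (simp_all add: cv_def)

lemma clist_cv: "clist (cv x z1 z2 z3 z4 z5 z6 z7) = [x, z1, z2, z3, z4, z5, z6, z7]"
  by (simp add: clist_def)

lemma one_point:
  fixes z1 z2 z3 z4 z5 z6 z7 w :: complex
  assumes w: "w^2 = Df z1 z2 z3 z4 z5 z6 z7" and q2: "q2f z1 z2 z3 z4 z5 z6 z7 \<noteq> 0"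
    and j2: "j2f z1 z2 z3 z4 z5 z6 z7 \<noteq> 0"
  defines "s \<equiv> (- q1f z1 z2 z3 z4 z5 z6 z7 + w) / (2 * q2f z1 z2 z3 z4 z5 z6 z7)"
  defines "t \<equiv> - (j0f z1 z2 z3 z4 z5 z6 z7 + j1f z1 z2 z3 z4 z5 z6 z7 * s) / j2f z1 z2 z3 z4 z5 z6 z7"
  defines "x \<equiv> - (z1 * t + z2 * s + z3 * (s * t))"
  shows "has_multiple_solution (cv x z1 z2 z3 z4 z5 z6 z7)"
    and "j2f z1 z2 z3 z4 z5 z6 z7 * x = e2f z1 z2 z3 z4 z5 z6 z7 * s^2 + e1f z1 z2 z3 z4 z5 z6 z7 * s + z1 * j0f z1 z2 z3 z4 z5 z6 z7"
proof -
  have e: "j0f z1 z2 z3 z4 z5 z6 z7 = z2 * z5 - z1 * z6" "j1f z1 z2 z3 z4 z5 z6 z7 = z2 * z7 - z3 * z6"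
    "j2f z1 z2 z3 z4 z5 z6 z7 = z3 * z5 - z1 * z7" by (simp_all add: j0f_def j1f_def j2f_def)
  have h: "z4 + z5*t + z6 * s + z7*(s * t) = 0 \<and> (z2 + z3*t)*(z5 + z7 * s) - (z1 + z3 * s)*(z6 + z7*t) = 0"
    using pt_sol[where aa=z1 and ab=z2 and ac=z3 and ba=z4 and bb=z5 and bc=z6 and bd=z7 and w=w and s=s and t=t] w q2 j2
    by (simp add: s_def t_def gdefs)
  show "has_multiple_solution (cv x z1 z2 z3 z4 z5 z6 z7)"
    by (rule hms_intro[where s=s and t=t]) (use h in \<open>simp_all add: x_def algebra_simps\<close>)
  show "j2f z1 z2 z3 z4 z5 z6 z7 * x = e2f z1 z2 z3 z4 z5 z6 z7 * s^2 + e1f z1 z2 z3 z4 z5 z6 z7 * s + z1 * j0f z1 z2 z3 z4 z5 z6 z7"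
    using x_formula[where aa=z1 and ab=z2 and ac=z3 and bb=z5 and bc=z6 and bd=z7 and s=s and t=t] j2 unfolding x_def t_def
    by (simp add: e2f_def e1f_def j0f_def j1f_def j2f_def algebra_simps)
qed

lemma two_points:
  fixes z1 z2 z3 z4 z5 z6 z7 :: complex
  assumes g: "genf z1 z2 z3 z4 z5 z6 z7 \<noteq> 0"
  shows "\<exists>x1 x2. x1 \<noteq> x2 \<and> has_multiple_solution (cv x1 z1 z2 z3 z4 z5 z6 z7)
            \<and> has_multiple_solution (cv x2 z1 z2 z3 z4 z5 z6 z7)"
proof -
  define J2 where "J2 = j2f z1 z2 z3 z4 z5 z6 z7"
  define Q2 where "Q2 = q2f z1 z2 z3 z4 z5 z6 z7"
  define Q1 where "Q1 = q1f z1 z2 z3 z4 z5 z6 z7"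
  define DD where "DD = Df z1 z2 z3 z4 z5 z6 z7"
  define E2 where "E2 = e2f z1 z2 z3 z4 z5 z6 z7"
  define E1 where "E1 = e1f z1 z2 z3 z4 z5 z6 z7"
  define E0 where "E0 = z1 * j0f z1 z2 z3 z4 z5 z6 z7"
  define W where "W = Wf z1 z2 z3 z4 z5 z6 z7"
  have nz: "J2 \<noteq> 0" "Q2 \<noteq> 0" "DD \<noteq> 0" "W \<noteq> 0"
    using g by (auto simp: genf_def J2_def Q2_def DD_def W_def)
  have We: "W = E1 * Q2 - E2 * Q1" by (simp add: W_def Wf_def E1_def Q2_def E2_def Q1_def)
  define w where "w = csqrt DD"
  have w2: "w^2 = DD" "(-w)^2 = DD" by (simp_all add: w_def)
  have wnz: "w \<noteq> 0" using w2 nz by auto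
  define s1 where "s1 = (- Q1 + w) / (2 * Q2)"
  define s2 where "s2 = (- Q1 + (-w)) / (2 * Q2)"
  obtain x1 where h1: "has_multiple_solution (cv x1 z1 z2 z3 z4 z5 z6 z7)" and e1: "J2 * x1 = E2 * s1^2 + E1 * s1 + E0"
    using one_point[of w z1 z2 z3 z4 z5 z6 z7] w2 nz
    unfolding J2_def Q2_def Q1_def DD_def E2_def E1_def E0_def s1_def by blast
  obtain x2 where h2: "has_multiple_solution (cv x2 z1 z2 z3 z4 z5 z6 z7)" and e2: "J2 * x2 = E2 * s2^2 + E1 * s2 + E0"
    using one_point[of "-w" z1 z2 z3 z4 z5 z6 z7] w2 nz
    unfolding J2_def Q2_def Q1_def DD_def E2_def E1_def E0_def s2_def by blast
  have "J2 * (x1 - x2) = (s1 - s2) * (E2 * (s1 + s2) + E1)"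
    using e1 e2 by (simp add: algebra_simps power2_eq_square)
  also have "s1 - s2 = w / Q2" using nz by (simp add: s1_def s2_def field_simps)
  also have "s1 + s2 = - Q1 / Q2" using nz by (simp add: s1_def s2_def field_simps)
  also have "E2 * (- Q1 / Q2) + E1 = W / Q2" using nz We by (simp add: field_simps)
  finally have "J2 * (x1 - x2) = w / Q2 * (W / Q2)" .
  hence "x1 \<noteq> x2" using nz wnz by auto
  thus ?thesis using h1 h2 by blast
qed

definition gen7 :: T7 where "gen7 = genf y1 y2 y3 y4 y5 y6 y7"

lemma EV7_gen7: "EV7 gen7 [z1, z2, z3, z4, z5, z6, z7] = genf z1 z2 z3 z4 z5 z6 z7"
  unfolding gen7_def by (simp add: genf_rh[OF rh_EV7] EV7_y)

lemma gen7_ne0: "gen7 \<noteq> 0"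
proof
  assume "gen7 = 0"
  hence "EV7 gen7 [1, 3, 3, 3, -3, -1, -3 :: complex] = 0" by (simp add: EV7h)
  thus False unfolding EV7_gen7 by (simp add: gdefs)
qed

lemma EV8_smult: "EV8 (smult a p) (x # ys) = EV7 a ys * EV8 p (x # ys)"
proof -
  have "EV8 (smult a p) (x # ys) = EV8 ([:a:] * p) (x # ys)" by simp
  also have "\<dots> = EV8 [:a:] (x # ys) * EV8 p (x # ys)" by (rule rh.mul[OF rh_EV8])
  also have "EV8 [:a:] (x # ys) = EV7 a ys" by simp
  finally show ?thesis .
qed

lemma EV8_Det8_DetF: "EV8 Det8 (clist c) = DetF (c 0) (c 1) (c 2) (c 3) (c 4) (c 5) (c 6) (c 7)"
  by (simp add: clist_def EV8_Det8 DetF_def)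

lemma const_pow: "[:c ^ n:] = [:c:] ^ n"
proof (induct n)
  case (Suc n)
  have "[:c ^ Suc n:] = smult c [:c ^ n:]" by simp
  also have "\<dots> = [:c:] * [:c:] ^ n" using Suc by simp
  finally show ?case by simp
qed simp

lemma Q8_dvd:
  assumes Q: "\<forall>c. has_multiple_solution c \<longrightarrow> EV8 Q8 (clist c) = (0::complex)"
  shows "Det8 dvd Q8"
proof -
  obtain q r where qr: "pseudo_divmod Q8 Det8 = (q, r)" by (cases "pseudo_divmod Q8 Det8") auto
  define k where "k = Suc (degree Q8) - degree Det8"
  have "coeff Det8 2 = ell7" by (simp add: Det8_def numeral_2_eq_2)
  hence lc: "coeff Det8 (degree Det8) = y7^2" by (simp add: degree_Det8 ell7_def)
  have eq: "smult ((y7^2) ^ k) Q8 = Det8 * q + r" and dr: "r = 0 \<or> degree r < 2"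
    using pseudo_divmod[OF Det8_ne0 qr] lc degree_Det8 by (simp_all add: k_def)
  have R: "r = [:coeff r 0, coeff r 1:]"
    by (rule poly_eqI) (use dr in \<open>auto simp: coeff_pCons coeff_eq_0 split: nat.splits\<close>)
  have pt: "EV7 (coeff r 0) [z1, z2, z3, z4, z5, z6, z7] = 0 \<and> EV7 (coeff r 1) [z1, z2, z3, z4, z5, z6, z7] = 0"
    if g: "genf z1 z2 z3 z4 z5 z6 z7 \<noteq> 0" for z1 z2 z3 z4 z5 z6 z7 :: complex
  proof -
    have vx: "EV7 (coeff r 0) [z1, z2, z3, z4, z5, z6, z7] + x * EV7 (coeff r 1) [z1, z2, z3, z4, z5, z6, z7] = 0"
      if hx: "has_multiple_solution (cv x z1 z2 z3 z4 z5 z6 z7)" for x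
    proof -
      have a: "EV8 Q8 (x # [z1, z2, z3, z4, z5, z6, z7]) = 0" using Q hx clist_cv by metis
      have b: "EV8 Det8 (x # [z1, z2, z3, z4, z5, z6, z7]) = 0"
        using hms_vanish[OF hx] EV8_Det8_DetF[of "cv x z1 z2 z3 z4 z5 z6 z7"] by (simp add: clist_cv)
      have "EV8 (smult ((y7^2) ^ k) Q8) (x # [z1, z2, z3, z4, z5, z6, z7])
          = EV8 (Det8 * q + r) (x # [z1, z2, z3, z4, z5, z6, z7])" by (simp add: eq)
      hence "EV8 r (x # [z1, z2, z3, z4, z5, z6, z7]) = 0"
        using a b by (simp add: EV8_smult rh.add[OF rh_EV8] rh.mul[OF rh_EV8])
      thus ?thesis by (subst (asm) R) simp
    qed
    obtain x1 x2 where "x1 \<noteq> x2" "has_multiple_solution (cv x1 z1 z2 z3 z4 z5 z6 z7)"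
        "has_multiple_solution (cv x2 z1 z2 z3 z4 z5 z6 z7)" using two_points[OF g] by blast
    note v1 = vx[OF this(2)] and v2 = vx[OF this(3)]
    define A where "A = EV7 (coeff r 0) [z1, z2, z3, z4, z5, z6, z7]"
    define B where "B = EV7 (coeff r 1) [z1, z2, z3, z4, z5, z6, z7]"
    have "(x1 - x2) * B = (A + x1 * B) - (A + x2 * B)" by (simp add: algebra_simps)
    also have "\<dots> = 0" using v1 v2 by (simp only: A_def B_def) simp
    finally have "B = 0" using \<open>x1 \<noteq> x2\<close> by simp
    thus ?thesis using v1 by (simp add: A_def B_def)
  qed
  have zero: "gen7 * coeff r i = 0" if "i = 0 \<or> i = 1" for i
  proof (rule EV7_zero, intro allI impI)
    fix ys :: "complex list" assume "length ys = 7"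
    then obtain z1 z2 z3 z4 z5 z6 z7 where ys: "ys = [z1,z2,z3,z4,z5,z6,z7]"
      by (auto simp: length_Suc_conv numeral_eq_Suc)
    show "EV7 (gen7 * coeff r i) ys = 0"
      using pt[of z1 z2 z3 z4 z5 z6 z7] that by (cases "genf z1 z2 z3 z4 z5 z6 z7 = 0")
        (auto simp: ys rh.mul[OF rh_EV7] EV7_gen7)
  qed
  have "coeff r 0 = 0" "coeff r 1 = 0" using zero[of 0] zero[of 1] gen7_ne0 by auto
  hence "r = 0" using R by simp
  hence eq2: "[:y7:] ^ (2*k) * Q8 = Det8 * q" using eq by (simp add: const_pow[symmetric] power_mult)
  have pr: "prime_elem [:y7:]" using prime_y7 by (simp add: prime_elem_const_poly_iff)
  have nd: "\<not> [:y7:] dvd Det8"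
  proof
    assume "[:y7:] dvd Det8"
    hence "y7 dvd coeff Det8 0" by (simp add: const_poly_dvd_iff)
    thus False using gamma7_not_dvd by (simp add: Det8_def)
  qed
  have cop: "coprime Det8 ([:y7:] ^ (2*k))"
    using prime_elem_imp_coprime[OF pr nd] by (simp add: coprime_commute)
  have "Det8 dvd [:y7:] ^ (2*k) * Q8" using eq2 by simp
  thus ?thesis using cop by (simp add: coprime_dvd_mult_right_iff)
qed

lemma unit_lift:
  assumes "\<And>c::'a::idom. c dvd 1 \<Longrightarrow> c = 1 \<or> c = -1"
  shows "(p::'a poly) dvd 1 \<Longrightarrow> p = 1 \<or> p = -1"
proof -
  assume "p dvd 1"
  then obtain c where "p = [:c:]" "c dvd 1" unfolding is_unit_poly_iff by blast
  thus ?thesis using assms[of c] by (auto simp: one_pCons)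
qed

lemma unit_int: "(k::int) dvd 1 \<Longrightarrow> k = 1 \<or> k = -1"
  by (auto simp: zdvd1_eq abs_if split: if_splits)

lemma unit_T8: "(p::T8) dvd 1 \<Longrightarrow> p = 1 \<or> p = -1"
  by (rule unit_lift, rule unit_lift, rule unit_lift, rule unit_lift, rule unit_lift,
      rule unit_lift, rule unit_lift, rule unit_lift, erule unit_int)

definition psiinv :: "ipoly \<Rightarrow> T8" where "psiinv = inv psi"

lemma psi_psiinv: "psi (psiinv p) = p"
  unfolding psiinv_def using bij_psi by (simp add: bij_is_surj surj_f_inv_f)

lemma psi_eq_iff: "psi a = psi b \<longleftrightarrow> a = b"
  using bij_psi by (auto simp: bij_def inj_eq)

lemma psi_unit: "(psi a) dvd 1 \<longleftrightarrow> a dvd 1"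
proof
  assume "(psi a) dvd 1"
  then obtain v where "1 = psi a * v" by (auto elim: dvdE)
  hence "psi 1 = psi (a * psiinv v)" by (simp add: rh.mul[OF rh_psi] rh.one[OF rh_psi] psi_psiinv)
  hence "1 = a * psiinv v" by (simp only: psi_eq_iff)
  thus "a dvd 1" by (rule dvdI)
next
  assume "a dvd 1"
  then obtain v where "1 = a * v" by (auto elim: dvdE)
  hence "1 = psi a * psi v" by (metis rh.mul[OF rh_psi] rh.one[OF rh_psi])
  thus "(psi a) dvd 1" by (rule dvdI)
qed

lemma unit_ipoly: "(u::ipoly) dvd 1 \<Longrightarrow> u = 1 \<or> u = -1"
proof -
  assume "u dvd 1"
  hence "(psiinv u) dvd 1" using psi_unit[of "psiinv u"] by (simp add: psi_psiinv)
  hence "psiinv u = 1 \<or> psiinv u = -1" by (rule unit_T8)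
  hence "psi (psiinv u) = psi 1 \<or> psi (psiinv u) = psi (-1)" by auto
  thus ?thesis by (simp add: psi_psiinv rh.one[OF rh_psi] rh.minus[OF rh_psi])
qed

lemma psi_irreducible: assumes "irreducible x" shows "irreducible (psi x)"
proof (rule irreducibleI)
  show "psi x \<noteq> 0"
  proof
    assume "psi x = 0" hence "x = 0" by (rule psi_inj)
    thus False using assms by simp
  qed
  show "\<not> (psi x) dvd 1" using assms by (simp add: psi_unit irreducible_def)
  fix a b assume "psi x = a * b"
  hence "psi x = psi (psiinv a * psiinv b)" by (simp add: rh.mul[OF rh_psi] psi_psiinv)
  hence "x = psiinv a * psiinv b" by (simp only: psi_eq_iff)
  hence "(psiinv a) dvd 1 \<or> (psiinv b) dvd 1" using assms by (auto simp: irreducible_def)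
  thus "a dvd 1 \<or> b dvd 1" by (metis psi_unit psi_psiinv)
qed

lemma irreducible_disc: "irreducible disc_poly"
  using psi_irreducible[OF irreducible_Det8] by (simp add: psi_Det8)

lemma uniq: assumes "irreducible Q" "vanishes_on_multiple Q"
  shows "Q = disc_poly \<or> Q = - disc_poly"
proof -
  define Q8 where "Q8 = psiinv Q"
  have QQ: "psi Q8 = Q" by (simp add: Q8_def psi_psiinv)
  have "\<forall>c. has_multiple_solution c \<longrightarrow> EV8 Q8 (clist c) = 0"
    using assms(2) unfolding vanishes_on_multiple_def by (metis QQ eval_psi)
  hence "Det8 dvd Q8" by (rule Q8_dvd)
  then obtain w where "Q8 = Det8 * w" by auto
  hence Qe: "Q = disc_poly * psi w" using QQ by (simp add: rh.mul[OF rh_psi] psi_Det8)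
  hence "disc_poly dvd 1 \<or> (psi w) dvd 1" using assms(1) by (auto simp: irreducible_def)
  hence "(psi w) dvd 1" using irreducible_disc by (auto simp: irreducible_def)
  hence "psi w = 1 \<or> psi w = -1" by (rule unit_ipoly)
  thus ?thesis using Qe by auto
qed

lemma irreducible_neg: "irreducible (x::ipoly) \<Longrightarrow> irreducible (- x)"
proof -
  assume a: "irreducible x"
  show ?thesis
  proof (rule irreducibleI)
    show "- x \<noteq> 0" using a by auto
    show "\<not> (- x) dvd 1" using a by (simp add: irreducible_def)
    fix p q assume "- x = p * q"
    hence "x = (- p) * q" by (metis minus_minus mult_minus_left)
    hence "(- p) dvd 1 \<or> q dvd 1" using irreducibleD[OF a] by blast
    thus "p dvd 1 \<or> q dvd 1" by simp
  qed
qed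

lemma vanishes_neg: "vanishes_on_multiple Q \<Longrightarrow> vanishes_on_multiple (- Q)"
  by (simp add: vanishes_on_multiple_def eval_uminus)

lemma disc_part: "\<forall>D. is_discriminant D \<longleftrightarrow> D = disc_poly \<or> D = - disc_poly"
proof (intro allI iffI)
  fix D assume "is_discriminant D"
  thus "D = disc_poly \<or> D = - disc_poly" using uniq unfolding is_discriminant_def by blast
next
  fix D assume "D = disc_poly \<or> D = - disc_poly"
  thus "is_discriminant D"
  proof
    assume D: "D = disc_poly"
    show ?thesis unfolding is_discriminant_def D
    proof (intro conjI allI impI)
      fix Q assume "irreducible Q \<and> vanishes_on_multiple Q"
      thus "Q = disc_poly \<or> Q = - disc_poly" using uniq by blast
    qed (rule irreducible_disc, rule disc_vanishes)
  next
    assume D: "D = - disc_poly"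
    show ?thesis unfolding is_discriminant_def D
    proof (intro conjI allI impI)
      fix Q assume "irreducible Q \<and> vanishes_on_multiple Q"
      hence "Q = disc_poly \<or> Q = - disc_poly" using uniq by blast
      thus "Q = - disc_poly \<or> Q = - (- disc_poly)" by auto
    qed (rule irreducible_neg[OF irreducible_disc], rule vanishes_neg[OF disc_vanishes])
  qed
qed

lemma span_base: "g \<in> S \<Longrightarrow> g \<in> ideal_span S"
  unfolding ideal_span_def by (rule CollectI, rule exI[of _ "{g}"], rule exI[of _ "\<lambda>_. 1"]) simp

lemma span_mult: assumes "x \<in> ideal_span S" shows "r * x \<in> ideal_span S"
proof -
  obtain G h where x: "x = (\<Sum>g\<in>G. h g * g)" "finite G" "G \<subseteq> S"
    using assms unfolding ideal_span_def by blast
  have "r * x = (\<Sum>g\<in>G. (r * h g) * g)" by (simp add: x sum_distrib_left mult.assoc)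
  thus ?thesis using x unfolding ideal_span_def by (intro CollectI exI[of _ G] exI[of _ "\<lambda>g. r * h g"]) simp
qed

lemma span_add: assumes "x \<in> ideal_span S" "y \<in> ideal_span S" shows "x + y \<in> ideal_span S"
proof -
  obtain G h where x: "x = (\<Sum>g\<in>G. h g * g)" "finite G" "G \<subseteq> S"
    using assms(1) unfolding ideal_span_def by blast
  obtain G' h' where y: "y = (\<Sum>g\<in>G'. h' g * g)" "finite G'" "G' \<subseteq> S"
    using assms(2) unfolding ideal_span_def by blast
  define k where "k g = (if g \<in> G then h g else 0) + (if g \<in> G' then h' g else 0)" for g
  have "(\<Sum>g\<in>G \<union> G'. (if g \<in> G then h g else 0) * g) = (\<Sum>g\<in>G. (if g \<in> G then h g else 0) * g)"
    by (rule sum.mono_neutral_right) (use x y in auto)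
  hence 1: "x = (\<Sum>g\<in>G \<union> G'. (if g \<in> G then h g else 0) * g)" using x by simp
  have "(\<Sum>g\<in>G \<union> G'. (if g \<in> G' then h' g else 0) * g) = (\<Sum>g\<in>G'. (if g \<in> G' then h' g else 0) * g)"
    by (rule sum.mono_neutral_right) (use x y in auto)
  hence 2: "y = (\<Sum>g\<in>G \<union> G'. (if g \<in> G' then h' g else 0) * g)" using y by simp
  have "x + y = (\<Sum>g\<in>G \<union> G'. k g * g)"
    unfolding 1 2 by (simp add: k_def sum.distrib[symmetric] distrib_right)
  thus ?thesis using x y unfolding ideal_span_def by blast
qed

definition m1 :: "nat \<Rightarrow> nat \<Rightarrow> ipoly" where "m1 u v = det2 (M1 u 0) (M1 u 1) (M1 v 0) (M1 v 1)"
definition m2 :: "nat \<Rightarrow> nat \<Rightarrow> ipoly" where "m2 u v = det2 (M2 u 0) (M2 u 1) (M2 v 0) (M2 v 1)"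

lemma m1_in: "u < v \<Longrightarrow> v < 4 \<Longrightarrow> m1 u v \<in> minors_ideal M1"
  unfolding minors_ideal_def m1_def by (rule span_base) blast
lemma m2_in: "u < v \<Longrightarrow> v < 4 \<Longrightarrow> m2 u v \<in> minors_ideal M2"
  unfolding minors_ideal_def m2_def by (rule span_base) blast

lemma prod_in: "x \<in> minors_ideal M1 \<Longrightarrow> y \<in> minors_ideal M2 \<Longrightarrow>
   r * (x * y) \<in> ideal_prod (minors_ideal M1) (minors_ideal M2)"
  unfolding ideal_prod_def by (rule span_mult, rule span_base) blast

lemma disc_identity: "disc_poly = (-4) * (m1 0 1 * m2 2 3) + 1 * (m1 1 2 * m2 1 2) + (-1) * (m1 1 2 * m2 0 3)
   + (-1) * (m1 0 3 * m2 1 2) + 1 * (m1 0 3 * m2 0 3)"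
  unfolding disc_poly_def m1_def m2_def M1_def M2_def det2_def by (simp add: algebra_simps)

lemma disc_in_ideal: "disc_poly \<in> ideal_prod (minors_ideal M1) (minors_ideal M2)"
  unfolding disc_identity
  by (intro span_add[of _ "{x * y |x y. x \<in> minors_ideal M1 \<and> y \<in> minors_ideal M2}", folded ideal_prod_def]
      prod_in m1_in m2_in) simp_all

theorem mainTheorem3:
  shows "(\<forall>D. is_discriminant D \<longleftrightarrow> D = disc_poly \<or> D = - disc_poly)
         \<and> disc_poly \<in> ideal_prod (minors_ideal M1) (minors_ideal M2)"
  using disc_part disc_in_ideal by blast

end
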